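(* In the setting and notation described in the context, assume (A5) and (A6). Then for every $\gamma_0$ with $0<\gamma_0<\tilde\gamma_0=(1-\gamma_{10})/2$, as $n\to\infty$, $$P\left(\{\Delta_{p_0,n}\le n^{-\gamma_0}\}\cap\{\Delta_{2,n}\le n^{-\gamma_0}\}\cap\{\Delta_{p_0+1,n}\le n^{-\gamma_0}\}\cap\{\Delta_{p_0+M-1,n}\le n^{-\gamma_0}\}\right)\to1.$$
   Context: Setting. $n=1,2,\ldots$ indexes a sequence of problems; for each $n$: an integer $p=p_n$, fixed integers $p_0,M$ (independent of $n$) with $1\le p_0\le M$, $p_0<p$; a continuous $f_n:[0,1]^p\to\mathbb{R}$; design points $\mathbf{x}_i=(x_{i1},\ldots,x_{ip})'$, $i=1,\ldots,n$, forming the rows of the $n\times p$ matrix $\mathbf{X}$. $Z_d=\{1,\ldots,d\}$, $\mathcal{A}_0=Z_{p_0}$; $\mathbf{x}_{\mathcal{A}}$, $\mathbf{X}_{\mathcal{A}}$ are the subvector/column-submatrix indexed by $\mathcal{A}\subset Z_p$. $a_n=O(n^\gamma)$ means $|a_n|\le cn^\gamma$ for a constant $c$ and large $n$. Discrepancy: for an $m\times d$ matrix $\mathbf{A}$ with rows $\mathbf{a}_i'\in[0,1]^d$, $\delta_{d,m}(\mathbf{A})=\sup_{\mathbf{x}\in[0,1]^d}|F_m(\mathbf{x})-\prod_kx_k|$, $F_m(\mathbf{x})=\frac1m\#\{i:a_{ik}\le x_k\ \forall k\}$. Sets: $\mathcal{U}_1=\{\mathcal{A}\subset Z_p:|\mathcal{A}|=M,\mathcal{A}_0\setminus\mathcal{A}\ne\emptyset\}$,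 $\mathcal{U}_2=\{\mathcal{A}\subset Z_p:|\mathcal{A}|=2\}$, $\mathcal{U}_3=\{\mathcal{A}_0\cup I_1:I_1\subset Z_p\setminus\mathcal{A}_0,|I_1|=1\}$, $\mathcal{U}_4=\{\mathcal{A}_0\cup I_2:I_2\subset Z_p\setminus\mathcal{A}_0,|I_2|=M-1\}$. $\Delta_{p_0,n}=\delta_{p_0,n}(\mathbf{X}_{\mathcal{A}_0})$, $\Delta_{2,n}=\max_{\mathcal{A}\in\mathcal{U}_2}\delta_{2,n}(\mathbf{X}_{\mathcal{A}})$, $\Delta_{p_0+1,n}=\max_{\mathcal{A}\in\mathcal{U}_3}\delta_{p_0+1,n}(\mathbf{X}_{\mathcal{A}})$, $\Delta_{p_0+M-1,n}=\max_{\mathcal{A}\in\mathcal{U}_4}\delta_{p_0+M-1,n}(\mathbf{X}_{\mathcal{A}})$. Also given for each $n$: $\widetilde f_n\in C[0,1]^{p_0}$ and $\eta_n>0$. Subset best linear approximation: $(\beta_0(\mathcal{A}),\boldsymbol\beta(\mathcal{A})')'$ minimizes $\int_{[0,1]^p}[f_n(\mathbf{x})-\phi_0-\boldsymbol\phi'\mathbf{x}_{\mathcal{A}}]^2d\mathbf{x}$; $\boldsymbol\beta_{Z_p}(\mathcal{A})\in\mathbb{R}^p$ equals $\boldsymbol\beta(\mathcal{A})$ on $\mathcal{A}$ and $0$ elsewhere. Hardy–Krause variation $V_{HK}$: for $g:[0,1]^d\to\mathbb{R}$, $V_{HK}(g)=\sum_{\emptyset\ne u\subset Z_d}V^{Vit}(g_u)$,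 where $g_u$ is $g$ with $x_k=1$ for $k\notin u$ and $V^{Vit}$ is the Vitali variation (supremum over finite partitions into axis-parallel sub-rectangles $J$ of $\sum|\Delta_J|$, $\Delta_J$ the alternating-sign vertex sum); functions of some coordinates of $\mathbf{x}\in[0,1]^p$ are regarded as functions on $[0,1]^p$. $C_{1n}=\max_{j\le p}\max(V_{HK}(\widetilde f_n),V_{HK}(x_j\widetilde f_n))$; $C_{2n}=\max_{\mathbf{x}}|f_n(\mathbf{x})|$; $C_{3n}=\max_{\mathbf{x}}|\widetilde f_n(\mathbf{x}_{\mathcal{A}_0})-\mathbf{x}'\boldsymbol\beta_{Z_p}(\mathcal{A}_0)-\beta_0(\mathcal{A}_0)|$; $C_{4n}=\max_{\mathcal{A}\in\mathcal{U}_1}\max_{\mathbf{x}}|\widetilde f_n(\mathbf{x}_{\mathcal{A}_0})-\mathbf{x}'\boldsymbol\beta_{Z_p}(\mathcal{A})-\beta_0(\mathcal{A})|$; $V_{1n}=V_{HK}(\widetilde f_n(\mathbf{x}_{\mathcal{A}_0})-\beta_0(\mathcal{A}_0)-\mathbf{x}'\boldsymbol\beta_{Z_p}(\mathcal{A}_0))$; $V_{2n}=\max_{\mathcal{A}\in\mathcal{U}_1}V_{HK}(\widetilde f_n(\mathbf{x}_{\mathcal{A}_0})-\beta_0(\mathcal{A})-\mathbf{x}'\boldsymbol\beta_{Z_p}(\mathcal{A}))$ (maxima over $\mathbf{x}\in[0,1]^p$). (A5): the entries $x_{ij}$ are i.i.d. uniform on $[0,1)$. (A6): $\eta_n=O(n^{-\gamma_1})$,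 $V_{1n}=O(n^{\gamma_2})$, $V_{2n}=O(n^{\gamma_3})$, $C_{1n}=O(n^{\gamma_4})$, $C_{2n}=O(n^{\gamma_5})$, $C_{3n}=O(n^{\gamma_6})$, $C_{4n}=O(n^{\gamma_7})$, $\log p=O(n^{\gamma_{10}})$, where $\gamma_1,\gamma_{10}>0$, $\gamma_{10}<1$, and with $\tilde\gamma_0=(1-\gamma_{10})/2$: $\gamma_2,\gamma_3,\gamma_4,\gamma_5<\tilde\gamma_0$, $\gamma_6,\gamma_7<\gamma_1$, $\gamma_4+\gamma_6<\tilde\gamma_0$, $\gamma_5+\gamma_6<\tilde\gamma_0$, $\gamma_4+\gamma_7<\tilde\gamma_0$, $\gamma_5+\gamma_7<\tilde\gamma_0$. *)

theory Defs
  imports "HOL-Probability.Probability"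
begin

text \<open>Points of [0,1]^d are extensional functions on the index set {1..d}
  (the PiM / PiE convention); coordinate k of x is x k.\<close>

definition cube :: "nat \<Rightarrow> (nat \<Rightarrow> real) set" where
  "cube d = PiE {1..d} (\<lambda>_. {0..1})"

definition unif_cube :: "nat \<Rightarrow> (nat \<Rightarrow> real) measure" where
  "unif_cube d = PiM {1..d} (\<lambda>_. uniform_measure lborel {0..1::real})"

definition max_over :: "'i set \<Rightarrow> ('i \<Rightarrow> 'b::{linorder,zero}) \<Rightarrow> 'b" where
  "max_over U h = (if U = {} then 0 else Max (h ` U))"

text \<open>Discrepancy delta_{|A|,m}(X_A) of the column submatrix of the m x p matrix Xm
  (entries Xm i k, rows i = 1..m) indexed by A.\<close>
definition disc :: "nat \<Rightarrow> (nat \<Rightarrow> nat \<Rightarrow> real) \<Rightarrow> nat set \<Rightarrow> real" where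
  "disc m Xm A = Sup ((\<lambda>x. \<bar>real (card {i \<in> {1..m}. \<forall>k\<in>A. Xm i k \<le> x k}) / real m
                          - (\<Prod>k\<in>A. x k)\<bar>) ` PiE A (\<lambda>_. {0..1}))"

definition U1 :: "nat \<Rightarrow> nat \<Rightarrow> nat \<Rightarrow> nat set set" where
  "U1 p p0 M = {A. A \<subseteq> {1..p} \<and> card A = M \<and> \<not> {1..p0} \<subseteq> A}"
definition U2 :: "nat \<Rightarrow> nat set set" where
  "U2 p = {A. A \<subseteq> {1..p} \<and> card A = 2}"
definition U3 :: "nat \<Rightarrow> nat \<Rightarrow> nat set set" where
  "U3 p p0 = {{1..p0} \<union> I1 | I1. I1 \<subseteq> {1..p} - {1..p0} \<and> card I1 = 1}"
definition U4 :: "nat \<Rightarrow> nat \<Rightarrow> nat \<Rightarrow> nat set set" where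
  "U4 p p0 M = {{1..p0} \<union> I2 | I2. I2 \<subseteq> {1..p} - {1..p0} \<and> card I2 = M - 1}"

text \<open>Subset best linear approximation: a pair (beta_0(A), beta_{Z_p}(A)) where the
  coefficient vector vanishes outside A, minimising the L2([0,1]^p) error.\<close>
definition lin_obj :: "nat \<Rightarrow> ((nat \<Rightarrow> real) \<Rightarrow> real) \<Rightarrow> real \<Rightarrow> (nat \<Rightarrow> real) \<Rightarrow> real" where
  "lin_obj p f \<phi>0 \<phi> = (\<integral>x. (f x - \<phi>0 - (\<Sum>k\<in>{1..p}. \<phi> k * x k))\<^sup>2 \<partial>unif_cube p)"

definition best_lin :: "nat \<Rightarrow> ((nat \<Rightarrow> real) \<Rightarrow> real) \<Rightarrow> nat set \<Rightarrow> real \<times> (nat \<Rightarrow> real)" where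
  "best_lin p f A = (SOME (b0, b). (\<forall>k. k \<notin> A \<longrightarrow> b k = 0) \<and>
      (\<forall>\<phi>0 \<phi>. (\<forall>k. k \<notin> A \<longrightarrow> \<phi> k = 0) \<longrightarrow> lin_obj p f b0 b \<le> lin_obj p f \<phi>0 \<phi>))"

text \<open>Hardy--Krause variation on [0,1]^p.  For a nonempty u, g_u fixes x_k = 1 for k not in u;
  the Vitali variation of g_u is the supremum over grid partitions of [0,1]^u
  (for each k in u a strictly increasing list 0 = t k 0 < ... < t k (m k) = 1).\<close>
definition vertex :: "nat \<Rightarrow> nat set \<Rightarrow> (nat \<Rightarrow> real) \<Rightarrow> (nat \<Rightarrow> real) \<Rightarrow> nat set \<Rightarrow> nat \<Rightarrow> real" where
  "vertex p u a b v = (\<lambda>k\<in>{1..p}. if k \<in> v then b k else if k \<in> u then a k else 1)"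

definition vit_delta :: "nat \<Rightarrow> ((nat \<Rightarrow> real) \<Rightarrow> real) \<Rightarrow> nat set \<Rightarrow> (nat \<Rightarrow> real) \<Rightarrow> (nat \<Rightarrow> real) \<Rightarrow> real" where
  "vit_delta p g u a b = (\<Sum>v\<in>Pow u. (-1) ^ card (u - v) * g (vertex p u a b v))"

definition valid_grid :: "nat set \<Rightarrow> (nat \<Rightarrow> nat) \<Rightarrow> (nat \<Rightarrow> nat \<Rightarrow> real) \<Rightarrow> bool" where
  "valid_grid u m t = (\<forall>k\<in>u. 0 < m k \<and> t k 0 = 0 \<and> t k (m k) = 1 \<and> (\<forall>i<m k. t k i < t k (Suc i)))"

definition vitali :: "nat \<Rightarrow> ((nat \<Rightarrow> real) \<Rightarrow> real) \<Rightarrow> nat set \<Rightarrow> ereal" where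
  "vitali p g u = (SUP mt \<in> {(m, t). valid_grid u m t}.
      ereal (\<Sum>j\<in>PiE u (\<lambda>k. {..<fst mt k}).
         \<bar>vit_delta p g u (\<lambda>k. snd mt k (j k)) (\<lambda>k. snd mt k (Suc (j k)))\<bar>))"

definition V_HK :: "nat \<Rightarrow> ((nat \<Rightarrow> real) \<Rightarrow> real) \<Rightarrow> ereal" where
  "V_HK p g = (\<Sum>u\<in>{u. u \<subseteq> {1..p} \<and> u \<noteq> {}}. vitali p g u)"

definition resid :: "nat \<Rightarrow> nat \<Rightarrow> ((nat \<Rightarrow> real) \<Rightarrow> real) \<Rightarrow> ((nat \<Rightarrow> real) \<Rightarrow> real)
     \<Rightarrow> nat set \<Rightarrow> (nat \<Rightarrow> real) \<Rightarrow> real" where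
  "resid p p0 f ft A x = ft (restrict x {1..p0}) - fst (best_lin p f A)
      - (\<Sum>k\<in>{1..p}. x k * snd (best_lin p f A) k)"

definition C1 :: "nat \<Rightarrow> nat \<Rightarrow> ((nat \<Rightarrow> real) \<Rightarrow> real) \<Rightarrow> ereal" where
  "C1 p p0 ft = max_over {1..p} (\<lambda>j. max (V_HK p (\<lambda>x. ft (restrict x {1..p0})))
                                         (V_HK p (\<lambda>x. x j * ft (restrict x {1..p0}))))"
definition C2 :: "nat \<Rightarrow> ((nat \<Rightarrow> real) \<Rightarrow> real) \<Rightarrow> real" where
  "C2 p f = Sup ((\<lambda>x. \<bar>f x\<bar>) ` cube p)"
definition C3 :: "nat \<Rightarrow> nat \<Rightarrow> ((nat \<Rightarrow> real) \<Rightarrow> real) \<Rightarrow> ((nat \<Rightarrow> real) \<Rightarrow> real) \<Rightarrow> real" where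
  "C3 p p0 f ft = Sup ((\<lambda>x. \<bar>resid p p0 f ft {1..p0} x\<bar>) ` cube p)"
definition C4 :: "nat \<Rightarrow> nat \<Rightarrow> nat \<Rightarrow> ((nat \<Rightarrow> real) \<Rightarrow> real) \<Rightarrow> ((nat \<Rightarrow> real) \<Rightarrow> real) \<Rightarrow> real" where
  "C4 p p0 M f ft = max_over (U1 p p0 M) (\<lambda>A. Sup ((\<lambda>x. \<bar>resid p p0 f ft A x\<bar>) ` cube p))"
definition V1 :: "nat \<Rightarrow> nat \<Rightarrow> ((nat \<Rightarrow> real) \<Rightarrow> real) \<Rightarrow> ((nat \<Rightarrow> real) \<Rightarrow> real) \<Rightarrow> ereal" where
  "V1 p p0 f ft = V_HK p (resid p p0 f ft {1..p0})"
definition V2 :: "nat \<Rightarrow> nat \<Rightarrow> nat \<Rightarrow> ((nat \<Rightarrow> real) \<Rightarrow> real) \<Rightarrow> ((nat \<Rightarrow> real) \<Rightarrow> real) \<Rightarrow> ereal" where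
  "V2 p p0 M f ft = max_over (U1 p p0 M) (\<lambda>A. V_HK p (resid p p0 f ft A))"

definition bigO_pow :: "(nat \<Rightarrow> real) \<Rightarrow> real \<Rightarrow> bool" where
  "bigO_pow a \<gamma> = (\<exists>c. \<forall>\<^sub>F n in sequentially. \<bar>a n\<bar> \<le> c * real n powr \<gamma>)"
definition bigO_pow_e :: "(nat \<Rightarrow> ereal) \<Rightarrow> real \<Rightarrow> bool" where
  "bigO_pow_e a \<gamma> = (\<exists>c. \<forall>\<^sub>F n in sequentially. \<bar>a n\<bar> \<le> ereal (c * real n powr \<gamma>))"

end

theory Submission
  imports Defs "HOL-Real_Asymp.Real_Asymp"
begin


definition Fc :: "nat \<Rightarrow> (nat \<Rightarrow> nat \<Rightarrow> real) \<Rightarrow> nat set \<Rightarrow> (nat \<Rightarrow> real) \<Rightarrow> real" where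
  "Fc m Xm A x = real (card {i \<in> {1..m}. \<forall>k\<in>A. Xm i k \<le> x k}) / real m"

definition grid :: "nat \<Rightarrow> nat set \<Rightarrow> (nat \<Rightarrow> real) set" where
  "grid K A = PiE A (\<lambda>_. (\<lambda>j. real j / real K) ` {0..K})"

definition gmax :: "nat \<Rightarrow> (nat \<Rightarrow> nat \<Rightarrow> real) \<Rightarrow> nat set \<Rightarrow> nat \<Rightarrow> real" where
  "gmax m Xm A K = Max ((\<lambda>x. \<bar>Fc m Xm A x - (\<Prod>k\<in>A. x k)\<bar>) ` grid K A)"

lemma finite_grid: "finite A \<Longrightarrow> finite (grid K A)"
  unfolding grid_def by (intro finite_PiE) auto

lemma grid_ne: "grid K A \<noteq> {}"
  unfolding grid_def by (simp add: PiE_eq_empty_iff)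

lemma grid_sub: "grid K A \<subseteq> PiE A (\<lambda>_. {0..1})"
  unfolding grid_def by (auto simp: PiE_def Pi_def divide_le_eq_1)

lemma card_grid: "finite A \<Longrightarrow> card (grid K A) \<le> (K+1) ^ card A"
proof -
  assume A: "finite A"
  have "card (grid K A) = (\<Prod>k\<in>A. card ((\<lambda>j. real j / real K) ` {0..K}))"
    unfolding grid_def by (rule card_PiE[OF A])
  also have "\<dots> \<le> (\<Prod>k\<in>A. K + 1)"
    by (intro prod_mono) (auto intro: order.trans[OF card_image_le])
  finally show ?thesis by simp
qed

lemma Fc_mono: "(\<And>k. k \<in> A \<Longrightarrow> y k \<le> z k) \<Longrightarrow> Fc m Xm A y \<le> Fc m Xm A z"
  unfolding Fc_def
  by (intro divide_right_mono of_nat_mono card_mono) (auto intro: order.trans)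

lemma Fc_bounds: "0 \<le> Fc m Xm A x" "Fc m Xm A x \<le> 1"
proof -
  show "0 \<le> Fc m Xm A x" unfolding Fc_def by simp
  have "card {i \<in> {1..m}. \<forall>k\<in>A. Xm i k \<le> x k} \<le> card {1..m}"
    by (rule card_mono) auto
  then have "card {i \<in> {1..m}. \<forall>k\<in>A. Xm i k \<le> x k} \<le> m" by simp
  then show "Fc m Xm A x \<le> 1" unfolding Fc_def
    by (cases "m = 0") (auto simp: divide_le_eq_1)
qed

lemma prod_diff_le:
  fixes y z :: "nat \<Rightarrow> real"
  assumes "finite A" "\<And>k. k \<in> A \<Longrightarrow> 0 \<le> y k \<and> y k \<le> z k \<and> z k \<le> 1"
  shows "(\<Prod>k\<in>A. z k) - (\<Prod>k\<in>A. y k) \<le> (\<Sum>k\<in>A. z k - y k)"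
  using assms
proof (induction A rule: finite_induct)
  case empty then show ?case by simp
next
  case (insert a A)
  have h: "\<And>k. k \<in> A \<Longrightarrow> 0 \<le> y k \<and> y k \<le> z k \<and> z k \<le> 1" using insert by auto
  have IH: "(\<Prod>k\<in>A. z k) - (\<Prod>k\<in>A. y k) \<le> (\<Sum>k\<in>A. z k - y k)" using insert.IH h by blast
  have hz: "\<And>k. k \<in> A \<Longrightarrow> 0 \<le> z k \<and> z k \<le> 1" using h by (meson order.trans)
  have Pz: "0 \<le> (\<Prod>k\<in>A. z k)" "(\<Prod>k\<in>A. z k) \<le> 1"
    using hz by (auto intro!: prod_nonneg prod_le_1)
  have Py: "0 \<le> (\<Prod>k\<in>A. y k)" "(\<Prod>k\<in>A. y k) \<le> (\<Prod>k\<in>A. z k)"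
    using h by (auto intro!: prod_nonneg prod_mono)
  have a: "0 \<le> y a" "y a \<le> z a" "z a \<le> 1" using insert by auto
  have "z a * (\<Prod>k\<in>A. z k) - y a * (\<Prod>k\<in>A. y k)
       = (z a - y a) * (\<Prod>k\<in>A. z k) + y a * ((\<Prod>k\<in>A. z k) - (\<Prod>k\<in>A. y k))"
    by (simp add: algebra_simps)
  also have "\<dots> \<le> (z a - y a) * 1 + 1 * (\<Sum>k\<in>A. z k - y k)"
  proof (intro add_mono mult_mono)
  qed (use a Pz Py IH in auto)
  finally show ?case using insert by simp
qed

lemma disc_le_gmax:
  assumes A: "finite A" and K: "K > 0"
  shows "disc m Xm A \<le> gmax m Xm A K + real (card A) / real K"
proof -
  let ?G = "gmax m Xm A K"
  have gle: "\<bar>Fc m Xm A g - (\<Prod>k\<in>A. g k)\<bar> \<le> ?G" if "g \<in> grid K A" for g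
    unfolding gmax_def using that finite_grid[OF A] by (intro Max_ge) auto
  have main: "\<bar>real (card {i \<in> {1..m}. \<forall>k\<in>A. Xm i k \<le> x k}) / real m - (\<Prod>k\<in>A. x k)\<bar>
      \<le> ?G + real (card A) / real K" if x: "x \<in> PiE A (\<lambda>_. {0..1})" for x
  proof -
    define lo where "lo = (\<lambda>k\<in>A. real (nat \<lfloor>real K * x k\<rfloor>) / real K)"
    define hi where "hi = (\<lambda>k\<in>A. real (nat \<lceil>real K * x k\<rceil>) / real K)"
    have Kr: "real K > 0" using K by simp
    have bnd: "0 \<le> lo k \<and> lo k \<le> x k \<and> x k \<le> hi k \<and> hi k \<le> 1 \<and> hi k - lo k \<le> 1 / real K"
      if k: "k \<in> A" for k
    proof -
      have xk: "0 \<le> x k" "x k \<le> 1" using x k by (auto simp: PiE_def Pi_def)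
      have Kx: "0 \<le> real K * x k" using xk by simp
      then have f0: "0 \<le> \<lfloor>real K * x k\<rfloor>" by simp
      have c0: "0 \<le> \<lceil>real K * x k\<rceil>" proof -
        have "-1 < real K * x k" using Kx by linarith
        then show ?thesis by simp
      qed
      have l: "lo k = of_int \<lfloor>real K * x k\<rfloor> / real K" using f0 k by (simp add: lo_def)
      have h: "hi k = of_int \<lceil>real K * x k\<rceil> / real K" using c0 k by (simp add: hi_def)
      have "of_int \<lfloor>real K * x k\<rfloor> \<le> real K * x k" by simp
      then have 1: "lo k \<le> x k" using Kr by (simp add: l divide_le_eq mult.commute)
      have "real K * x k \<le> of_int \<lceil>real K * x k\<rceil>" by simp
      then have 2: "x k \<le> hi k" using Kr by (simp add: h le_divide_eq mult.commute)
      have "\<lceil>real K * x k\<rceil> \<le> \<lceil>real K * 1\<rceil>" using xk Kr by (intro ceiling_mono) simp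
      then have "of_int \<lceil>real K * x k\<rceil> \<le> real K" by simp
      then have 3: "hi k \<le> 1" using Kr by (simp add: h divide_le_eq)
      have "of_int \<lceil>real K * x k\<rceil> - of_int \<lfloor>real K * x k\<rfloor> \<le> (1::real)"
        by (metis ceiling_diff_floor_le_1 of_int_1 of_int_diff of_int_le_iff)
      then have 4: "hi k - lo k \<le> 1 / real K" using Kr
        by (simp add: h l diff_divide_distrib[symmetric] divide_right_mono)
      have 5: "0 \<le> lo k" using f0 l by simp
      show ?thesis using 1 2 3 4 5 by simp
    qed
    have logrid: "lo \<in> grid K A"
    proof -
      have "nat \<lfloor>real K * x k\<rfloor> \<in> {0..K}" if k: "k \<in> A" for k
      proof -
        have "\<lfloor>real K * x k\<rfloor> \<le> \<lfloor>real K * 1\<rfloor>" using x k Kr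
          by (intro floor_mono mult_left_mono) (auto simp: PiE_def Pi_def)
        then show ?thesis by simp
      qed
      then show ?thesis unfolding grid_def lo_def by (auto simp: PiE_def Pi_def)
    qed
    have higrid: "hi \<in> grid K A"
    proof -
      have "nat \<lceil>real K * x k\<rceil> \<in> {0..K}" if k: "k \<in> A" for k
      proof -
        have "real K * x k \<le> real K * 1" using x k Kr
          by (intro mult_left_mono) (auto simp: PiE_def Pi_def)
        then show ?thesis by simp
      qed
      then show ?thesis unfolding grid_def hi_def by (auto simp: PiE_def Pi_def)
    qed
    have Flo: "Fc m Xm A lo \<le> Fc m Xm A x" and Fhi: "Fc m Xm A x \<le> Fc m Xm A hi"
      using bnd by (auto intro!: Fc_mono)
    have Plo: "(\<Prod>k\<in>A. lo k) \<le> (\<Prod>k\<in>A. x k)" and Phi: "(\<Prod>k\<in>A. x k) \<le> (\<Prod>k\<in>A. hi k)"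
      using bnd by (auto intro!: prod_mono intro: order.trans)
    have "(\<Prod>k\<in>A. hi k) - (\<Prod>k\<in>A. lo k) \<le> (\<Sum>k\<in>A. hi k - lo k)"
      using bnd by (intro prod_diff_le[OF A]) (auto intro: order.trans)
    also have "\<dots> \<le> (\<Sum>k\<in>A. 1 / real K)" using bnd by (intro sum_mono) auto
    finally have Pd: "(\<Prod>k\<in>A. hi k) - (\<Prod>k\<in>A. lo k) \<le> real (card A) / real K" by simp
    have g1: "\<bar>Fc m Xm A lo - (\<Prod>k\<in>A. lo k)\<bar> \<le> ?G" by (rule gle[OF logrid])
    have g2: "\<bar>Fc m Xm A hi - (\<Prod>k\<in>A. hi k)\<bar> \<le> ?G" by (rule gle[OF higrid])
    have "\<bar>Fc m Xm A x - (\<Prod>k\<in>A. x k)\<bar> \<le> ?G + real (card A) / real K"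
      using Flo Fhi Plo Phi Pd g1 g2 by (simp add: abs_le_iff)
    then show ?thesis by (simp add: Fc_def)
  qed
  show ?thesis unfolding disc_def
    by (rule cSUP_least) (use main in \<open>auto simp: PiE_eq_empty_iff\<close>)
qed

lemma gmax_le_disc:
  assumes A: "finite A"
  shows "gmax m Xm A K \<le> disc m Xm A"
proof -
  have bdd: "bdd_above ((\<lambda>x. \<bar>real (card {i \<in> {1..m}. \<forall>k\<in>A. Xm i k \<le> x k}) / real m
                          - (\<Prod>k\<in>A. x k)\<bar>) ` PiE A (\<lambda>_. {0..1}))"
  proof (rule bdd_aboveI2)
    fix x assume x: "x \<in> PiE A (\<lambda>_. {0..1::real})"
    have "0 \<le> (\<Prod>k\<in>A. x k)" "(\<Prod>k\<in>A. x k) \<le> 1" using x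
      by (auto intro!: prod_nonneg prod_le_1 simp: PiE_def Pi_def)
    then show "\<bar>real (card {i \<in> {1..m}. \<forall>k\<in>A. Xm i k \<le> x k}) / real m - (\<Prod>k\<in>A. x k)\<bar> \<le> 1"
      using Fc_bounds[of m Xm A x, unfolded Fc_def] by (simp only: abs_le_iff) linarith
  qed
  have "\<And>g. g \<in> grid K A \<Longrightarrow> \<bar>Fc m Xm A g - (\<Prod>k\<in>A. g k)\<bar> \<le> disc m Xm A"
    unfolding disc_def Fc_def using grid_sub bdd by (intro cSUP_upper2) auto
  then show ?thesis unfolding gmax_def using finite_grid[OF A] grid_ne
    by (intro Max.boundedI) auto
qed



lemma Fc_sum: "Fc m Xm A x = (\<Sum>i\<in>{1..m}. if \<forall>k\<in>A. Xm i k \<le> x k then 1 else 0) / real m"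
proof -
  have "real (card {i \<in> {1..m}. \<forall>k\<in>A. Xm i k \<le> x k}) = (\<Sum>i\<in>{i \<in> {1..m}. \<forall>k\<in>A. Xm i k \<le> x k}. 1)"
    by simp
  also have "\<dots> = (\<Sum>i\<in>{1..m}. if \<forall>k\<in>A. Xm i k \<le> x k then 1 else 0)"
    by (rule sum.inter_filter) simp
  finally show ?thesis unfolding Fc_def by simp
qed

lemma meas_Fc:
  assumes X: "\<And>i k. (\<lambda>\<omega>. Xw \<omega> i k) \<in> borel_measurable N" and A: "finite A"
  shows "(\<lambda>\<omega>. Fc m (Xw \<omega>) A x) \<in> borel_measurable N"
proof -
  have P: "\<And>i. Measurable.pred N (\<lambda>\<omega>. \<forall>k\<in>A. Xw \<omega> i k \<le> x k)"
    by (intro pred_intros_finite(3) A) (simp add: pred_def borel_measurable_le[OF X borel_measurable_const])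
  show ?thesis unfolding Fc_sum
    by (intro borel_measurable_divide borel_measurable_const borel_measurable_sum measurable_If
       measurable_const predE P)
qed

lemma meas_gmax:
  assumes X: "\<And>i k. (\<lambda>\<omega>. Xw \<omega> i k) \<in> borel_measurable N" and A: "finite A"
  shows "(\<lambda>\<omega>. gmax m (Xw \<omega>) A K) \<in> borel_measurable N"
  unfolding gmax_def
  by (intro borel_measurable_Max finite_grid A borel_measurable_abs borel_measurable_diff
       meas_Fc X borel_measurable_const)

lemma meas_disc:
  assumes X: "\<And>i k. (\<lambda>\<omega>. Xw \<omega> i k) \<in> borel_measurable N" and A: "finite A"
  shows "(\<lambda>\<omega>. disc m (Xw \<omega>) A) \<in> borel_measurable N"
proof (rule borel_measurable_LIMSEQ_real)
  show "(\<lambda>\<omega>. gmax m (Xw \<omega>) A (Suc K)) \<in> borel_measurable N" for K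
    by (rule meas_gmax[OF X A])
  fix \<omega>
  have c: "(\<lambda>K. real (card A) / real (Suc K)) \<longlonglongrightarrow> 0"
    using LIMSEQ_Suc[OF lim_const_over_n[of "real (card A)"]] by simp
  show "(\<lambda>K. gmax m (Xw \<omega>) A (Suc K)) \<longlonglongrightarrow> disc m (Xw \<omega>) A"
  proof (rule tendsto_sandwich[of "\<lambda>K. disc m (Xw \<omega>) A - real (card A) / real (Suc K)" _ _ "\<lambda>K. disc m (Xw \<omega>) A"])
    show "\<forall>\<^sub>F K in sequentially. disc m (Xw \<omega>) A - real (card A) / real (Suc K) \<le> gmax m (Xw \<omega>) A (Suc K)"
      using disc_le_gmax[OF A, of "Suc _" m "Xw \<omega>"] by (auto simp: algebra_simps)
    show "\<forall>\<^sub>F K in sequentially. gmax m (Xw \<omega>) A (Suc K) \<le> disc m (Xw \<omega>) A"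
      using gmax_le_disc[OF A] by auto
    show "(\<lambda>K. disc m (Xw \<omega>) A - real (card A) / real (Suc K)) \<longlonglongrightarrow> disc m (Xw \<omega>) A"
      using tendsto_diff[OF tendsto_const c] by simp
  qed simp
qed

lemma unif_prob:
  assumes M: "prob_space M" and f: "f \<in> borel_measurable M"
    and d: "distr M lborel f = uniform_measure lborel {0..<1}" and c: "0 \<le> c" "c \<le> (1::real)"
  shows "measure M {\<omega> \<in> space M. f \<omega> \<le> c} = c"
proof -
  have f': "f \<in> measurable M lborel" using f by simp
  have "{\<omega> \<in> space M. f \<omega> \<le> c} = f -` {..c} \<inter> space M" by auto
  then have "measure M {\<omega> \<in> space M. f \<omega> \<le> c} = measure (distr M lborel f) {..c}"
    by (simp add: measure_distr[OF f'])
  also have "\<dots> = measure lborel ({0..<1} \<inter> {..c}) / measure lborel {0..<1::real}"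
    unfolding d by (rule measure_uniform_measure) auto
  also have "\<dots> = c"
  proof (cases "c < 1")
    case True
    then have "{0..<1} \<inter> {..c} = {0..c}" by auto
    then show ?thesis using c by simp
  next
    case False
    then have "{0..<1} \<inter> {..c} = {0..<1::real}" by auto
    then show ?thesis using c False by simp
  qed
  finally show ?thesis .
qed



lemma (in prob_space) hoeff_cell:
  fixes Xw :: "'a \<Rightarrow> nat \<Rightarrow> nat \<Rightarrow> real"
  assumes ind: "indep_vars (\<lambda>_. borel) (\<lambda>(i, j) \<omega>. Xw \<omega> i j) ({1..m} \<times> J)"
    and unif: "\<And>i j. i \<in> {1..m} \<Longrightarrow> j \<in> J \<Longrightarrow> distr M lborel (\<lambda>\<omega>. Xw \<omega> i j) = uniform_measure lborel {0..<1}"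
    and A: "A \<subseteq> J" "finite A" and g: "\<And>k. k \<in> A \<Longrightarrow> 0 \<le> g k \<and> g k \<le> 1"
    and m: "m > 0" and t: "t \<ge> 0"
  shows "prob {\<omega> \<in> space M. t < \<bar>Fc m (Xw \<omega>) A g - (\<Prod>k\<in>A. g k)\<bar>} \<le> 2 * exp (-2 * real m * t\<^sup>2)"
proof -
  have Xmeas: "(\<lambda>\<omega>. Xw \<omega> i j) \<in> borel_measurable M" if "i \<in> {1..m}" "j \<in> J" for i j
    using indep_vars_def[THEN iffD1, OF ind] that by auto
  define Y where "Y i \<omega> = (if \<forall>k\<in>A. Xw \<omega> i k \<le> g k then 1 else 0::real)" for i \<omega>
  define Y' where "Y' i z = (if \<forall>k\<in>A. z (i, k) \<le> g k then 1 else 0::real)" for i and z :: "nat \<times> nat \<Rightarrow> real"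
  have r: "indep_vars (\<lambda>j. PiM ({j} \<times> A) (\<lambda>_. borel))
      (\<lambda>j \<omega>. restrict (\<lambda>ij. (\<lambda>(i, j) \<omega>. Xw \<omega> i j) ij \<omega>) ({j} \<times> A)) {1..m}"
    by (rule indep_vars_restrict[OF ind]) (use A in \<open>auto simp: disjoint_family_on_def\<close>)
  have Y'meas: "Y' i \<in> borel_measurable (PiM ({i} \<times> A) (\<lambda>_. borel))" for i
  proof -
    have P: "Measurable.pred (PiM ({i} \<times> A) (\<lambda>_. borel)) (\<lambda>z. \<forall>k\<in>A. z (i, k) \<le> g k)"
    proof (intro pred_intros_finite(3) A)
      fix k assume k: "k \<in> A"
      have cm: "(\<lambda>z. z (i, k)) \<in> borel_measurable (PiM ({i} \<times> A) (\<lambda>_. borel))"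
        by (rule measurable_component_singleton) (use k in auto)
      then show "Measurable.pred (PiM ({i} \<times> A) (\<lambda>_. borel)) (\<lambda>z. z (i, k) \<le> g k)"
        using borel_measurable_le[OF cm borel_measurable_const] by (simp add: pred_def)
    qed
    show ?thesis unfolding Y'_def
      by (intro measurable_If measurable_const predE P) auto
  qed
  have indY: "indep_vars (\<lambda>_. borel) Y {1..m}"
  proof -
    have "indep_vars (\<lambda>_. borel) (\<lambda>j \<omega>. Y' j (restrict (\<lambda>ij. (\<lambda>(i, j) \<omega>. Xw \<omega> i j) ij \<omega>) ({j} \<times> A))) {1..m}"
      by (rule indep_vars_compose2[OF r Y'meas])
    moreover have "(\<lambda>j \<omega>. Y' j (restrict (\<lambda>ij. (\<lambda>(i, j) \<omega>. Xw \<omega> i j) ij \<omega>) ({j} \<times> A))) = Y"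
      by (intro ext) (auto simp: Y_def Y'_def)
    ultimately show ?thesis by simp
  qed
  have Ymeas: "Y i \<in> borel_measurable M" if "i \<in> {1..m}" for i
    using indY that unfolding indep_vars_def by auto
  have probS: "prob {\<omega> \<in> space M. \<forall>k\<in>A. Xw \<omega> i k \<le> g k} = (\<Prod>k\<in>A. g k)" if i: "i \<in> {1..m}" for i
  proof (cases "A = {}")
    case True then show ?thesis by (simp add: prob_space)
  next
    case False
    have "prob (\<Inter>ij\<in>{i} \<times> A. (\<lambda>(i, j) \<omega>. Xw \<omega> i j) ij -` (\<lambda>(i', k). {..g k}) ij \<inter> space M)
        = (\<Prod>ij\<in>{i} \<times> A. prob ((\<lambda>(i, j) \<omega>. Xw \<omega> i j) ij -` (\<lambda>(i', k). {..g k}) ij \<inter> space M))"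
      by (rule indep_varsD[OF ind]) (use False A i in auto)
    moreover have "(\<Inter>ij\<in>{i} \<times> A. (\<lambda>(i, j) \<omega>. Xw \<omega> i j) ij -` (\<lambda>(i', k). {..g k}) ij \<inter> space M)
        = {\<omega> \<in> space M. \<forall>k\<in>A. Xw \<omega> i k \<le> g k}" using False by auto
    moreover have "(\<Prod>ij\<in>{i} \<times> A. prob ((\<lambda>(i, j) \<omega>. Xw \<omega> i j) ij -` (\<lambda>(i', k). {..g k}) ij \<inter> space M))
        = (\<Prod>k\<in>A. prob {\<omega> \<in> space M. Xw \<omega> i k \<le> g k})"
    proof -
      have "{i} \<times> A = (\<lambda>k. (i, k)) ` A" by auto
      then have "(\<Prod>ij\<in>{i} \<times> A. prob ((\<lambda>(i, j) \<omega>. Xw \<omega> i j) ij -` (\<lambda>(i', k). {..g k}) ij \<inter> space M))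
          = (\<Prod>k\<in>A. prob ((\<lambda>\<omega>. Xw \<omega> i k) -` {..g k} \<inter> space M))"
        by (simp add: prod.reindex inj_on_def)
      also have "\<dots> = (\<Prod>k\<in>A. prob {\<omega> \<in> space M. Xw \<omega> i k \<le> g k})"
        by (intro prod.cong refl arg_cong[where f=prob]) auto
      finally show ?thesis .
    qed
    moreover have "prob {\<omega> \<in> space M. Xw \<omega> i k \<le> g k} = g k" if k: "k \<in> A" for k
      by (rule unif_prob[OF prob_space_axioms Xmeas unif]) (use i k A g in auto)
    ultimately show ?thesis by simp
  qed
  have EY: "expectation (Y i) = (\<Prod>k\<in>A. g k)" if i: "i \<in> {1..m}" for i
  proof -
    have "expectation (Y i) = expectation (indicator {\<omega> \<in> space M. \<forall>k\<in>A. Xw \<omega> i k \<le> g k})"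
      by (intro Bochner_Integration.integral_cong) (auto simp: Y_def indicator_def)
    also have "\<dots> = prob {\<omega> \<in> space M. \<forall>k\<in>A. Xw \<omega> i k \<le> g k}"
      by (simp add: integral_indicator Int_absorb2)
    finally show ?thesis using probS[OF i] by simp
  qed
  interpret H: Hoeffding_ineq M "{1..m}" Y "\<lambda>_. 0" "\<lambda>_. 1" "\<Sum>i\<in>{1..m}. expectation (Y i)"
  proof unfold_locales
    show "finite {1..m}" by simp
    show "indep_vars (\<lambda>_. borel) Y {1..m}" by (rule indY)
    show "AE x in M. Y i x \<in> {0..1}" if "i \<in> {1..m}" for i
      by (rule AE_I2) (simp add: Y_def)
  qed (rule reflexive)
  have mu: "(\<Sum>i\<in>{1..m}. expectation (Y i)) = real m * (\<Prod>k\<in>A. g k)"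
    using EY by simp
  have H1: "prob {\<omega> \<in> space M. \<bar>(\<Sum>i\<in>{1..m}. Y i \<omega>) - (\<Sum>i\<in>{1..m}. expectation (Y i))\<bar> \<ge> real m * t}
      \<le> 2 * exp (-2 * (real m * t)\<^sup>2 / (\<Sum>i\<in>{1..m}. (1 - 0)\<^sup>2))"
    by (rule H.Hoeffding_ineq_abs_ge) (use t m in auto)
  have sub: "{\<omega> \<in> space M. t < \<bar>Fc m (Xw \<omega>) A g - (\<Prod>k\<in>A. g k)\<bar>}
      \<subseteq> {\<omega> \<in> space M. \<bar>(\<Sum>i\<in>{1..m}. Y i \<omega>) - (\<Sum>i\<in>{1..m}. expectation (Y i))\<bar> \<ge> real m * t}"
  proof safe
    fix \<omega> assume w: "\<omega> \<in> space M" and lt: "t < \<bar>Fc m (Xw \<omega>) A g - (\<Prod>k\<in>A. g k)\<bar>"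
    have F: "Fc m (Xw \<omega>) A g = (\<Sum>i\<in>{1..m}. Y i \<omega>) / real m"
      unfolding Fc_sum Y_def by simp
    have "(\<Sum>i\<in>{1..m}. Y i \<omega>) - real m * (\<Prod>k\<in>A. g k) = real m * (Fc m (Xw \<omega>) A g - (\<Prod>k\<in>A. g k))"
      using m by (simp add: F algebra_simps)
    then have "\<bar>(\<Sum>i\<in>{1..m}. Y i \<omega>) - real m * (\<Prod>k\<in>A. g k)\<bar> = real m * \<bar>Fc m (Xw \<omega>) A g - (\<Prod>k\<in>A. g k)\<bar>"
      by (simp add: abs_mult)
    moreover have "real m * t \<le> real m * \<bar>Fc m (Xw \<omega>) A g - (\<Prod>k\<in>A. g k)\<bar>"
      using lt by (intro mult_left_mono) auto
    ultimately show "real m * t \<le> \<bar>(\<Sum>i\<in>{1..m}. Y i \<omega>) - (\<Sum>i\<in>{1..m}. expectation (Y i))\<bar>"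
      unfolding mu by simp
  qed
  have meas2: "{\<omega> \<in> space M. \<bar>(\<Sum>i\<in>{1..m}. Y i \<omega>) - (\<Sum>i\<in>{1..m}. expectation (Y i))\<bar> \<ge> real m * t} \<in> events"
    using Ymeas by (intro borel_measurable_le borel_measurable_abs borel_measurable_diff borel_measurable_sum borel_measurable_const) auto
  have "prob {\<omega> \<in> space M. t < \<bar>Fc m (Xw \<omega>) A g - (\<Prod>k\<in>A. g k)\<bar>}
      \<le> prob {\<omega> \<in> space M. \<bar>(\<Sum>i\<in>{1..m}. Y i \<omega>) - (\<Sum>i\<in>{1..m}. expectation (Y i))\<bar> \<ge> real m * t}"
    by (rule finite_measure_mono[OF sub meas2])
  also have "\<dots> \<le> 2 * exp (-2 * (real m * t)\<^sup>2 / (\<Sum>i\<in>{1..m}. (1 - 0)\<^sup>2))" by (rule H1)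
  also have "-2 * (real m * t)\<^sup>2 / (\<Sum>i\<in>{1..m}. (1 - 0)\<^sup>2) = -2 * real m * t\<^sup>2"
    using m by (simp add: power2_eq_square)
  finally show ?thesis .
qed



lemma (in prob_space) core:
  fixes Xw :: "'a \<Rightarrow> nat \<Rightarrow> nat \<Rightarrow> real"
  assumes ind: "indep_vars (\<lambda>_. borel) (\<lambda>(i, j) \<omega>. Xw \<omega> i j) ({1..m} \<times> {1..P})"
    and unif: "\<And>i j. i \<in> {1..m} \<Longrightarrow> j \<in> {1..P} \<Longrightarrow> distr M lborel (\<lambda>\<omega>. Xw \<omega> i j) = uniform_measure lborel {0..<1}"
    and m: "m > 0" and s: "s > 0"
    and S: "finite S" "\<And>A. A \<in> S \<Longrightarrow> A \<subseteq> {1..P}" "\<And>A. A \<in> S \<Longrightarrow> card A \<le> D"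
    and K: "K > 0" "real D / real K \<le> s / 2"
  shows "prob {\<omega> \<in> space M. \<exists>A\<in>S. s < disc m (Xw \<omega>) A}
      \<le> real (card S) * real (K + 1) ^ D * (2 * exp (-2 * real m * (s / 2)\<^sup>2))"
proof -
  define b where "b = 2 * exp (-2 * real m * (s / 2)\<^sup>2)"
  define E where "E A g = {\<omega> \<in> space M. s / 2 < \<bar>Fc m (Xw \<omega>) A g - (\<Prod>k\<in>A. g k)\<bar>}" for A g
  have finA: "finite A" if "A \<in> S" for A using S(2)[OF that] finite_subset by blast
  have Xmeas: "(\<lambda>\<omega>. Xw \<omega> i j) \<in> borel_measurable M" if "i \<in> {1..m}" "j \<in> {1..P}" for i j
    using indep_vars_def[THEN iffD1, OF ind] that by auto
  have Xmeas': "(\<lambda>\<omega>. (\<lambda>i j. if i \<in> {1..m} \<and> j \<in> {1..P} then Xw \<omega> i j else 0) i k) \<in> borel_measurable M" for i k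
    using Xmeas by (cases "i \<in> {1..m} \<and> k \<in> {1..P}") auto
  have Eev: "E A g \<in> events" if A: "A \<in> S" for A g
  proof -
    have "E A g = {\<omega> \<in> space M. s / 2 < \<bar>Fc m (\<lambda>i j. if i \<in> {1..m} \<and> j \<in> {1..P} then Xw \<omega> i j else 0) A g - (\<Prod>k\<in>A. g k)\<bar>}"
    proof -
      have "Fc m (\<lambda>i j. if i \<in> {1..m} \<and> j \<in> {1..P} then Xw \<omega> i j else 0) A g = Fc m (Xw \<omega>) A g" for \<omega>
        unfolding Fc_def using S(2)[OF A] by (intro arg_cong[where f="\<lambda>S. real (card S) / real m"]) auto
      then show ?thesis unfolding E_def by simp
    qed
    also have "\<dots> \<in> events"
      by (intro borel_measurable_less borel_measurable_const borel_measurable_abs borel_measurable_diff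
          meas_Fc[OF Xmeas'] finA A)
    finally show ?thesis .
  qed
  have Eprob: "prob (E A g) \<le> b" if A: "A \<in> S" and g: "g \<in> grid K A" for A g
    unfolding E_def b_def
  proof (rule hoeff_cell[OF ind unif S(2)[OF A] finA[OF A] _ m])
    show "\<And>k. k \<in> A \<Longrightarrow> 0 \<le> g k \<and> g k \<le> 1" using grid_sub g by (auto simp: PiE_def Pi_def)
  qed (use s in auto)
  have sub: "{\<omega> \<in> space M. \<exists>A\<in>S. s < disc m (Xw \<omega>) A} \<subseteq> (\<Union>A\<in>S. \<Union>g\<in>grid K A. E A g)"
  proof safe
    fix \<omega> A assume w: "\<omega> \<in> space M" and A: "A \<in> S" and lt: "s < disc m (Xw \<omega>) A"
    have "disc m (Xw \<omega>) A \<le> gmax m (Xw \<omega>) A K + real (card A) / real K"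
      by (rule disc_le_gmax[OF finA[OF A] K(1)])
    also have "real (card A) / real K \<le> real D / real K"
      using S(3)[OF A] by (intro divide_right_mono) auto
    finally have "s / 2 < gmax m (Xw \<omega>) A K" using lt K(2) by linarith
    then obtain g where "g \<in> grid K A" "s / 2 < \<bar>Fc m (Xw \<omega>) A g - (\<Prod>k\<in>A. g k)\<bar>"
      unfolding gmax_def using finite_grid[OF finA[OF A]] grid_ne by (subst (asm) Max_gr_iff) auto
    then show "\<omega> \<in> (\<Union>A\<in>S. \<Union>g\<in>grid K A. E A g)" using A w unfolding E_def by blast
  qed
  have ev2: "(\<Union>g\<in>grid K A. E A g) \<in> events" if "A \<in> S" for A
    using Eev[OF that] finite_grid[OF finA[OF that]] by auto
  have "prob {\<omega> \<in> space M. \<exists>A\<in>S. s < disc m (Xw \<omega>) A} \<le> prob (\<Union>A\<in>S. \<Union>g\<in>grid K A. E A g)"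
    by (rule finite_measure_mono[OF sub]) (use ev2 S(1) in auto)
  also have "\<dots> \<le> (\<Sum>A\<in>S. prob (\<Union>g\<in>grid K A. E A g))"
    by (rule finite_measure_subadditive_finite[OF S(1)]) (use ev2 in auto)
  also have "\<dots> \<le> (\<Sum>A\<in>S. \<Sum>g\<in>grid K A. prob (E A g))"
    by (intro sum_mono finite_measure_subadditive_finite finite_grid finA) (use Eev in auto)
  also have "\<dots> \<le> (\<Sum>A\<in>S. \<Sum>g\<in>grid K A. b)"
    by (intro sum_mono Eprob) auto
  also have "\<dots> \<le> (\<Sum>A\<in>S. real (K + 1) ^ D * b)"
  proof (intro sum_mono)
    fix A assume A: "A \<in> S"
    have b0: "0 \<le> b" unfolding b_def by simp
    have "real (card (grid K A)) \<le> real ((K + 1) ^ card A)"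
      using card_grid[OF finA[OF A], of K] by (simp only: of_nat_le_iff)
    also have "\<dots> \<le> real ((K + 1) ^ D)"
      using S(3)[OF A] by (intro of_nat_mono power_increasing) auto
    finally have "real (card (grid K A)) * b \<le> real ((K + 1) ^ D) * b"
      by (intro mult_right_mono b0)
    then show "(\<Sum>g\<in>grid K A. b) \<le> real (K + 1) ^ D * b" by simp
  qed
  also have "\<dots> = real (card S) * real (K + 1) ^ D * b" by simp
  finally show ?thesis unfolding b_def .
qed



lemma max_over_le: "finite U \<Longrightarrow> 0 \<le> s \<Longrightarrow> (\<And>A. A \<in> U \<Longrightarrow> h A \<le> s) \<Longrightarrow> max_over U h \<le> (s::real)"
  unfolding max_over_def by (auto simp: Max_le_iff)

lemma meas_max_over:
  assumes "finite U" "\<And>A. A \<in> U \<Longrightarrow> (\<lambda>\<omega>. h \<omega> A) \<in> borel_measurable N"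
  shows "(\<lambda>\<omega>. max_over U (h \<omega>) :: real) \<in> borel_measurable N"
proof (cases "U = {}")
  case True then show ?thesis by (simp add: max_over_def)
next
  case False
  then have "(\<lambda>\<omega>. max_over U (h \<omega>)) = (\<lambda>\<omega>. Max ((\<lambda>A. h \<omega> A) ` U))"
    by (simp add: max_over_def)
  also have "\<dots> \<in> borel_measurable N" by (intro borel_measurable_Max assms)
  finally show ?thesis .
qed

lemma meas_disc':
  assumes X: "\<And>i k. i \<in> {1..m} \<Longrightarrow> k \<in> J \<Longrightarrow> (\<lambda>\<omega>. Xw \<omega> i k) \<in> borel_measurable N"
    and A: "A \<subseteq> J" "finite A"
  shows "(\<lambda>\<omega>. disc m (Xw \<omega>) A) \<in> borel_measurable N"
proof -
  define Xc where "Xc \<omega> i k = (if i \<in> {1..m} \<and> k \<in> J then Xw \<omega> i k else 0)" for \<omega> i k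
  have Xc: "(\<lambda>\<omega>. Xc \<omega> i k) \<in> borel_measurable N" for i k
    unfolding Xc_def using X by (cases "i \<in> {1..m} \<and> k \<in> J") auto
  have eq: "disc m (Xc \<omega>) A = disc m (Xw \<omega>) A" for \<omega>
  proof -
    have "{i \<in> {1..m}. \<forall>k\<in>A. Xc \<omega> i k \<le> x k} = {i \<in> {1..m}. \<forall>k\<in>A. Xw \<omega> i k \<le> x k}" for x
      using A(1) by (auto simp: Xc_def)
    then show ?thesis unfolding disc_def by simp
  qed
  show ?thesis using meas_disc[where Xw=Xc, OF Xc A(2), of m] by (simp add: eq)
qed

lemma card_small_subsets:
  assumes P: "P \<ge> 1"
  shows "card {A. A \<subseteq> {1..P} \<and> card A \<le> D} \<le> (D + 1) * P ^ D"
proof -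
  have eq: "{A. A \<subseteq> {1..P} \<and> card A \<le> D} = (\<Union>d\<in>{..D}. {A. A \<subseteq> {1..P} \<and> card A = d})" by auto
  have "card {A. A \<subseteq> {1..P} \<and> card A \<le> D} \<le> (\<Sum>d\<in>{..D}. card {A. A \<subseteq> {1..P} \<and> card A = d})"
    unfolding eq by (rule card_UN_le) simp
  also have "\<dots> = (\<Sum>d\<in>{..D}. P choose d)" by (simp add: n_subsets)
  also have "\<dots> \<le> (\<Sum>d\<in>{..D}. P ^ D)"
  proof (intro sum_mono)
    fix d assume d: "d \<in> {..D}"
    have "P choose d \<le> P ^ d"
      by (cases "d \<le> P") (auto simp: binomial_le_pow binomial_eq_0)
    also have "\<dots> \<le> P ^ D" using d P by (intro power_increasing) auto
    finally show "P choose d \<le> P ^ D" .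
  qed
  also have "\<dots> = (D + 1) * P ^ D" by simp
  finally show ?thesis .
qed

lemma step1:
  fixes \<Omega> :: "'a measure" and Xw :: "'a \<Rightarrow> nat \<Rightarrow> nat \<Rightarrow> real"
  assumes ps: "prob_space \<Omega>"
    and ind: "prob_space.indep_vars \<Omega> (\<lambda>_. borel) (\<lambda>(i, j) \<omega>. Xw \<omega> i j) ({1..n} \<times> {1..P})"
    and unif: "\<forall>i j. i \<in> {1..n} \<longrightarrow> j \<in> {1..P} \<longrightarrow> distr \<Omega> lborel (\<lambda>\<omega>. Xw \<omega> i j) = uniform_measure lborel {0..<1}"
    and p0: "1 \<le> p0" "p0 \<le> M" "p0 < P" and n: "n \<ge> 1" and s: "s > 0"
  shows "1 - real (p0 + M + 1) * real P ^ (p0 + M) * real (nat \<lceil>2 * real (p0 + M) / s\<rceil> + 1) ^ (p0 + M)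
            * (2 * exp (-2 * real n * (s / 2)\<^sup>2))
         \<le> measure \<Omega> {\<omega> \<in> space \<Omega>. disc n (Xw \<omega>) {1..p0} \<le> s
              \<and> max_over (U2 P) (disc n (Xw \<omega>)) \<le> s
              \<and> max_over (U3 P p0) (disc n (Xw \<omega>)) \<le> s
              \<and> max_over (U4 P p0 M) (disc n (Xw \<omega>)) \<le> s}"
proof -
  interpret prob_space \<Omega> by (rule ps)
  define D where "D = p0 + M"
  define K where "K = nat \<lceil>2 * real D / s\<rceil>"
  define S where "S = insert {1..p0} (U2 P \<union> U3 P p0 \<union> U4 P p0 M)"
  define Small where "Small = {A. A \<subseteq> {1..P} \<and> card A \<le> D}"
  have finSmall: "finite Small" unfolding Small_def
    by (rule finite_subset[of _ "Pow {1..P}"]) auto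
  have U2s: "U2 P \<subseteq> Small" unfolding U2_def Small_def D_def using p0 by auto
  have U3s: "U3 P p0 \<subseteq> Small"
  proof
    fix A assume "A \<in> U3 P p0"
    then obtain I1 where A: "A = {1..p0} \<union> I1" and I1: "I1 \<subseteq> {1..P} - {1..p0}" "card I1 = 1"
      unfolding U3_def by blast
    have "card A \<le> card {1..p0} + card I1" unfolding A by (rule card_Un_le)
    then have "card A \<le> D" using I1 p0 by (simp add: D_def)
    moreover have "A \<subseteq> {1..P}" using A I1 p0 by auto
    ultimately show "A \<in> Small" unfolding Small_def by simp
  qed
  have U4s: "U4 P p0 M \<subseteq> Small"
  proof
    fix A assume "A \<in> U4 P p0 M"
    then obtain I2 where A: "A = {1..p0} \<union> I2" and I2: "I2 \<subseteq> {1..P} - {1..p0}" "card I2 = M - 1"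
      unfolding U4_def by blast
    have "card A \<le> card {1..p0} + card I2" unfolding A by (rule card_Un_le)
    then have "card A \<le> D" using I2 p0 by (simp add: D_def)
    moreover have "A \<subseteq> {1..P}" using A I2 p0 by auto
    ultimately show "A \<in> Small" unfolding Small_def by simp
  qed
  have A0s: "{1..p0} \<in> Small" unfolding Small_def D_def using p0 by auto
  have SS: "S \<subseteq> Small" unfolding S_def using U2s U3s U4s A0s by auto
  have finS: "finite S" using finite_subset[OF SS finSmall] .
  have Ssub: "A \<subseteq> {1..P}" "card A \<le> D" if "A \<in> S" for A using SS that unfolding Small_def by auto
  have cardS: "real (card S) \<le> real (D + 1) * real P ^ D"
  proof -
    have "card S \<le> card Small" by (rule card_mono[OF finSmall SS])
    also have "\<dots> \<le> (D + 1) * P ^ D" unfolding Small_def by (rule card_small_subsets) (use p0 in auto)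
    finally show ?thesis by (metis of_nat_le_iff of_nat_mult of_nat_power)
  qed
  have D0: "D > 0" unfolding D_def using p0 by simp
  have Kge: "2 * real D / s \<le> real K" unfolding K_def by linarith
  have K0: "K > 0"
  proof -
    have "0 < 2 * real D / s" using D0 s by simp
    then show ?thesis using Kge by linarith
  qed
  have KD: "real D / real K \<le> s / 2"
  proof -
    have "real D \<le> s / 2 * real K" using Kge s by (simp add: field_simps)
    then show ?thesis using K0 by (simp add: divide_le_eq mult.commute)
  qed
  have Xmeas: "(\<lambda>\<omega>. Xw \<omega> i j) \<in> borel_measurable \<Omega>" if "i \<in> {1..n}" "j \<in> {1..P}" for i j
    using indep_vars_def[THEN iffD1, OF ind] that by auto
  have dmeas: "(\<lambda>\<omega>. disc n (Xw \<omega>) A) \<in> borel_measurable \<Omega>" if "A \<subseteq> {1..P}" for A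
    by (rule meas_disc'[OF Xmeas that]) (use that finite_subset in auto)
  define bad where "bad = {\<omega> \<in> space \<Omega>. \<exists>A\<in>S. s < disc n (Xw \<omega>) A}"
  have bad_ev: "bad \<in> events"
  proof -
    have "Measurable.pred \<Omega> (\<lambda>\<omega>. \<exists>A\<in>S. s < disc n (Xw \<omega>) A)"
    proof (intro pred_intros_finite(4) finS)
      fix A assume "A \<in> S"
      then show "Measurable.pred \<Omega> (\<lambda>\<omega>. s < disc n (Xw \<omega>) A)"
        using borel_measurable_less[OF borel_measurable_const dmeas[OF Ssub(1)]] by (simp add: pred_def)
    qed
    then show ?thesis unfolding bad_def by (simp add: pred_def)
  qed
  have core: "prob bad \<le> real (card S) * real (K + 1) ^ D * (2 * exp (-2 * real n * (s / 2)\<^sup>2))"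
    unfolding bad_def
    by (rule core[OF ind _ _ s finS Ssub K0 KD]) (use unif n in auto)
  define St where "St = {\<omega> \<in> space \<Omega>. disc n (Xw \<omega>) {1..p0} \<le> s
              \<and> max_over (U2 P) (disc n (Xw \<omega>)) \<le> s
              \<and> max_over (U3 P p0) (disc n (Xw \<omega>)) \<le> s
              \<and> max_over (U4 P p0 M) (disc n (Xw \<omega>)) \<le> s}"
  have finU: "finite (U2 P)" "finite (U3 P p0)" "finite (U4 P p0 M)"
    using finite_subset[OF U2s finSmall] finite_subset[OF U3s finSmall] finite_subset[OF U4s finSmall]
    by auto
  have St_ev: "St \<in> events"
  proof -
    have Us: "A \<subseteq> {1..P}" if "A \<in> U2 P \<or> A \<in> U3 P p0 \<or> A \<in> U4 P p0 M" for A
      using that U2s U3s U4s unfolding Small_def by auto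
    have [measurable]: "(\<lambda>\<omega>. disc n (Xw \<omega>) {1..p0}) \<in> borel_measurable \<Omega>"
      by (rule dmeas) (use p0 in auto)
    have [measurable]: "(\<lambda>\<omega>. max_over (U2 P) (disc n (Xw \<omega>))) \<in> borel_measurable \<Omega>"
      by (rule meas_max_over[OF finU(1)]) (use dmeas Us in auto)
    have [measurable]: "(\<lambda>\<omega>. max_over (U3 P p0) (disc n (Xw \<omega>))) \<in> borel_measurable \<Omega>"
      by (rule meas_max_over[OF finU(2)]) (use dmeas Us in auto)
    have [measurable]: "(\<lambda>\<omega>. max_over (U4 P p0 M) (disc n (Xw \<omega>))) \<in> borel_measurable \<Omega>"
      by (rule meas_max_over[OF finU(3)]) (use dmeas Us in auto)
    show ?thesis unfolding St_def by measurable
  qed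
  have sub: "space \<Omega> - bad \<subseteq> St"
  proof
    fix \<omega> assume w: "\<omega> \<in> space \<Omega> - bad"
    then have all: "\<And>A. A \<in> S \<Longrightarrow> disc n (Xw \<omega>) A \<le> s" unfolding bad_def by auto
    show "\<omega> \<in> St" unfolding St_def using w s
      by (auto intro!: max_over_le finU all simp: S_def)
  qed
  have "1 - prob bad = prob (space \<Omega> - bad)" using prob_compl[OF bad_ev] by simp
  also have "\<dots> \<le> prob St" by (rule finite_measure_mono[OF sub St_ev])
  finally have 1: "1 - prob bad \<le> prob St" .
  have b0: "0 \<le> real (K + 1) ^ D * (2 * exp (-2 * real n * (s / 2)\<^sup>2))" by simp
  have "prob bad \<le> real (D + 1) * real P ^ D * real (K + 1) ^ D * (2 * exp (-2 * real n * (s / 2)\<^sup>2))"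
  proof -
    have "prob bad \<le> real (card S) * (real (K + 1) ^ D * (2 * exp (-2 * real n * (s / 2)\<^sup>2)))"
      using core by (simp add: mult.assoc)
    also have "\<dots> \<le> (real (D + 1) * real P ^ D) * (real (K + 1) ^ D * (2 * exp (-2 * real n * (s / 2)\<^sup>2)))"
      by (rule mult_right_mono[OF cardS b0])
    finally show ?thesis by (simp add: mult.assoc)
  qed
  with 1 show ?thesis unfolding St_def D_def K_def by simp
qed



theorem lemma9:
  fixes \<Omega> :: "nat \<Rightarrow> 'a measure"
    and X :: "nat \<Rightarrow> 'a \<Rightarrow> nat \<Rightarrow> nat \<Rightarrow> real"
    and p :: "nat \<Rightarrow> nat" and p0 M :: nat
    and f ft :: "nat \<Rightarrow> (nat \<Rightarrow> real) \<Rightarrow> real"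
    and \<eta> :: "nat \<Rightarrow> real"
    and \<gamma>1 \<gamma>2 \<gamma>3 \<gamma>4 \<gamma>5 \<gamma>6 \<gamma>7 \<gamma>10 \<gamma>0 :: real
  assumes setting: "1 \<le> p0" "p0 \<le> M" "\<forall>n. p0 < p n"
    and f_cont: "\<forall>n. continuous_on (cube (p n)) (f n)"
    and ft_cont: "\<forall>n. continuous_on (cube p0) (ft n)"
    and eta_pos: "\<forall>n. \<eta> n > 0"
    and A5_prob: "\<forall>n. prob_space (\<Omega> n)"
    and A5_indep: "\<forall>n. prob_space.indep_vars (\<Omega> n) (\<lambda>_. borel)
                        (\<lambda>(i, j) \<omega>. X n \<omega> i j) ({1..n} \<times> {1..p n})"
    and A5_unif: "\<forall>n i j. i \<in> {1..n} \<longrightarrow> j \<in> {1..p n} \<longrightarrow>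
                    distr (\<Omega> n) lborel (\<lambda>\<omega>. X n \<omega> i j) = uniform_measure lborel {0..<1}"
    and A6: "bigO_pow \<eta> (- \<gamma>1)"
      "bigO_pow_e (\<lambda>n. V1 (p n) p0 (f n) (ft n)) \<gamma>2"
      "bigO_pow_e (\<lambda>n. V2 (p n) p0 M (f n) (ft n)) \<gamma>3"
      "bigO_pow_e (\<lambda>n. C1 (p n) p0 (ft n)) \<gamma>4"
      "bigO_pow (\<lambda>n. C2 (p n) (f n)) \<gamma>5"
      "bigO_pow (\<lambda>n. C3 (p n) p0 (f n) (ft n)) \<gamma>6"
      "bigO_pow (\<lambda>n. C4 (p n) p0 M (f n) (ft n)) \<gamma>7"
      "bigO_pow (\<lambda>n. ln (real (p n))) \<gamma>10"
    and A6_gam: "\<gamma>1 > 0" "\<gamma>10 > 0" "\<gamma>10 < 1"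
      "\<gamma>2 < (1 - \<gamma>10) / 2" "\<gamma>3 < (1 - \<gamma>10) / 2" "\<gamma>4 < (1 - \<gamma>10) / 2" "\<gamma>5 < (1 - \<gamma>10) / 2"
      "\<gamma>6 < \<gamma>1" "\<gamma>7 < \<gamma>1"
      "\<gamma>4 + \<gamma>6 < (1 - \<gamma>10) / 2" "\<gamma>5 + \<gamma>6 < (1 - \<gamma>10) / 2"
      "\<gamma>4 + \<gamma>7 < (1 - \<gamma>10) / 2" "\<gamma>5 + \<gamma>7 < (1 - \<gamma>10) / 2"
    and gam0: "0 < \<gamma>0" "\<gamma>0 < (1 - \<gamma>10) / 2"
  shows "(\<lambda>n. measure (\<Omega> n) {\<omega> \<in> space (\<Omega> n).
            disc n (X n \<omega>) {1..p0} \<le> real n powr (- \<gamma>0)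
          \<and> max_over (U2 (p n)) (disc n (X n \<omega>)) \<le> real n powr (- \<gamma>0)
          \<and> max_over (U3 (p n) p0) (disc n (X n \<omega>)) \<le> real n powr (- \<gamma>0)
          \<and> max_over (U4 (p n) p0 M) (disc n (X n \<omega>)) \<le> real n powr (- \<gamma>0)})
         \<longlonglongrightarrow> 1"
proof -
  define D where "D = p0 + M"
  define B where "B n = real (p0 + M + 1) * real (p n) ^ (p0 + M)
      * real (nat \<lceil>2 * real (p0 + M) / real n powr (- \<gamma>0)\<rceil> + 1) ^ (p0 + M)
      * (2 * exp (-2 * real n * (real n powr (- \<gamma>0) / 2)\<^sup>2))" for n
  let ?St = "\<lambda>n. {\<omega> \<in> space (\<Omega> n).
            disc n (X n \<omega>) {1..p0} \<le> real n powr (- \<gamma>0)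
          \<and> max_over (U2 (p n)) (disc n (X n \<omega>)) \<le> real n powr (- \<gamma>0)
          \<and> max_over (U3 (p n) p0) (disc n (X n \<omega>)) \<le> real n powr (- \<gamma>0)
          \<and> max_over (U4 (p n) p0 M) (disc n (X n \<omega>)) \<le> real n powr (- \<gamma>0)}"
  have low: "1 - B n \<le> measure (\<Omega> n) (?St n)" if n: "n \<ge> 1" for n
    unfolding B_def
    by (rule step1[OF A5_prob[rule_format] A5_indep[rule_format]])
       (use A5_unif setting n in auto)
  have up: "measure (\<Omega> n) (?St n) \<le> 1" for n
    by (rule prob_space.prob_le_1[OF A5_prob[rule_format]])
  have gg: "\<gamma>10 < 1 - 2 * \<gamma>0" using gam0 by simp
  obtain c where c: "\<forall>\<^sub>F n in sequentially. \<bar>ln (real (p n))\<bar> \<le> c * real n powr \<gamma>10"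
    using A6(8) unfolding bigO_pow_def by blast
  define R where "R x = 2 * real (D + 1) * (2 * real D + 2) ^ D * (x powr \<gamma>0) ^ D
      * exp (real D * c * x powr \<gamma>10 - x powr (1 - 2 * \<gamma>0) / 2)" for x :: real
  have "(R \<longlongrightarrow> 0) at_top" unfolding R_def using A6_gam(2) gam0(1) gg by real_asymp
  then have R0: "(\<lambda>n. R (real n)) \<longlonglongrightarrow> 0"
    by (rule filterlim_compose) (rule filterlim_real_sequentially)
  have BR: "\<forall>\<^sub>F n in sequentially. 0 \<le> B n \<and> B n \<le> R (real n)"
    using c eventually_ge_at_top[of 1]
  proof eventually_elim
    case (elim n)
    have n1: "real n \<ge> 1" using elim by simp
    have npos: "real n > 0" using n1 by simp
    define Pn where "Pn = real (p n)"
    have "p0 < p n" using setting(3) by blast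
    then have "1 \<le> p n" using setting(1) by linarith
    then have Pn1: "Pn \<ge> 1" unfolding Pn_def by simp
    have Ppow: "Pn ^ D \<le> exp (real D * c * real n powr \<gamma>10)"
    proof -
      have "Pn ^ D = exp (real D * ln Pn)"
        using Pn1 by (simp add: exp_of_nat_mult)
      also have "\<dots> \<le> exp (real D * c * real n powr \<gamma>10)"
        using elim(1) by (auto simp: Pn_def mult.assoc intro!: mult_left_mono)
      finally show ?thesis .
    qed
    define y where "y = 2 * real D * real n powr \<gamma>0"
    have y0: "0 \<le> y" unfolding y_def by simp
    have ng: "real n powr \<gamma>0 \<ge> 1" using n1 gam0(1) by (simp add: ge_one_powr_ge_zero)
    have yeq: "2 * real (p0 + M) / real n powr (- \<gamma>0) = y"
      unfolding y_def D_def by (simp add: powr_minus field_simps)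
    have Kb: "real (nat \<lceil>y\<rceil> + 1) \<le> (2 * real D + 2) * real n powr \<gamma>0"
    proof -
      have "real (nat \<lceil>y\<rceil>) = of_int \<lceil>y\<rceil>" using y0 by simp
      then have "real (nat \<lceil>y\<rceil>) \<le> y + 1" using ceiling_correct[of y] by linarith
      then have "real (nat \<lceil>y\<rceil> + 1) \<le> y + 2" by simp
      also have "\<dots> \<le> 2 * real D * real n powr \<gamma>0 + 2 * real n powr \<gamma>0" unfolding y_def using ng by simp
      finally show ?thesis by (simp add: algebra_simps)
    qed
    have Kpow: "real (nat \<lceil>y\<rceil> + 1) ^ D \<le> (2 * real D + 2) ^ D * (real n powr \<gamma>0) ^ D"
      using power_mono[OF Kb, of D] by (simp add: power_mult_distrib)
    have ex: "-2 * real n * (real n powr (- \<gamma>0) / 2)\<^sup>2 = - (real n powr (1 - 2 * \<gamma>0)) / 2"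
    proof -
      have "(real n powr (- \<gamma>0))\<^sup>2 = real n powr (- 2 * \<gamma>0)"
        by (simp add: power2_eq_square powr_add[symmetric])
      moreover have "real n * real n powr (- 2 * \<gamma>0) = real n powr (1 - 2 * \<gamma>0)"
        using npos by (simp add: powr_minus divide_inverse powr_diff)
      ultimately show ?thesis by (simp add: power_divide)
    qed
    have Beq: "B n = 2 * real (D + 1) * (Pn ^ D * real (nat \<lceil>y\<rceil> + 1) ^ D) * exp (- (real n powr (1 - 2 * \<gamma>0)) / 2)"
      unfolding B_def ex yeq Pn_def D_def by (simp add: algebra_simps)
    have "B n \<le> 2 * real (D + 1) * (exp (real D * c * real n powr \<gamma>10) * ((2 * real D + 2) ^ D * (real n powr \<gamma>0) ^ D))
               * exp (- (real n powr (1 - 2 * \<gamma>0)) / 2)"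
      unfolding Beq
      by (intro mult_right_mono mult_left_mono mult_mono Ppow Kpow) (use Pn1 in auto)
    also have "\<dots> = R (real n)"
    proof -
      have "exp (real D * c * real n powr \<gamma>10 - real n powr (1 - 2 * \<gamma>0) / 2)
          = exp (real D * c * real n powr \<gamma>10) * exp (- (real n powr (1 - 2 * \<gamma>0)) / 2)"
        by (simp add: exp_add[symmetric])
      then show ?thesis unfolding R_def by (simp only: mult_ac)
    qed
    finally have "B n \<le> R (real n)" .
    moreover have "0 \<le> B n" unfolding Beq using Pn1 by simp
    ultimately show ?case by simp
  qed
  have B0: "B \<longlonglongrightarrow> 0"
    by (rule tendsto_sandwich[of "\<lambda>_. 0" _ _ "\<lambda>n. R (real n)"]) (use BR R0 in \<open>auto elim: eventually_mono\<close>)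
  show ?thesis
  proof (rule tendsto_sandwich[of "\<lambda>n. 1 - B n" _ _ "\<lambda>_. 1"])
    show "\<forall>\<^sub>F n in sequentially. 1 - B n \<le> measure (\<Omega> n) (?St n)"
      using eventually_ge_at_top[of 1] by eventually_elim (rule low)
    show "\<forall>\<^sub>F n in sequentially. measure (\<Omega> n) (?St n) \<le> 1"
      using up by (intro always_eventually allI)
    show "(\<lambda>n. 1 - B n) \<longlonglongrightarrow> 1" using tendsto_diff[OF tendsto_const B0, of 1] by simp
  qed simp
qed

end
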